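(* Let $n=2\ell$ where $\ell\ge3$ is odd. For $0\le k\le n-1$ let $p_k:=\left(1,\cos\frac{2\pi k}{n},\sin\frac{2\pi k}{n}\right)\in\mathbb{R}^3$, and let $X:=(\langle p_k,p_{k'}\rangle)_{0\le k,k'\le n-1}$. Then $X$ is a Gram-Lorentz matrix that is not completely positive; in particular $X$ is completely positive semidefinite but not completely positive.
   Context: The Lorentz cone is $\mathcal{L}_m:=\{(c,x)\in\mathbb{R}\times\mathbb{R}^{m-1}: c\ge\|x\|\}$. A real symmetric $n\times n$ matrix is Gram-Lorentz if it is the Gram matrix of vectors lying in some $\mathcal{L}_m$. An $n\times n$ matrix $X$ is completely positive if $X_{ij}=\langle a_i,a_j\rangle$ for some entrywise nonnegative vectors $a_1,\dots,a_n\in\mathbb{R}^k_+$, and completely positive semidefinite if $X_{ij}=\mathrm{Tr}(P_iP_j)$ for some Hermitian positive semidefinite $d\times d$ matrices $P_1,\dots,P_n$ (some $d\ge1$). *)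

theory Defs
  imports Complex_Main
begin

text \<open>Vectors in R^m are represented as functions nat => real, with only the
indices 0..m-1 relevant; a family of n vectors/matrices is indexed by i < n.
Index 0 is the "c" coordinate of the Lorentz cone.\<close>

definition lorentz_cone :: "nat \<Rightarrow> (nat \<Rightarrow> real) set" where
  "lorentz_cone m = {v. v 0 \<ge> sqrt (\<Sum>t\<in>{1..<m}. (v t)\<^sup>2)}"

definition gram_lorentz :: "nat \<Rightarrow> (nat \<Rightarrow> nat \<Rightarrow> real) \<Rightarrow> bool" where
  "gram_lorentz n X \<longleftrightarrow>
     (\<exists>m\<ge>1. \<exists>v :: nat \<Rightarrow> nat \<Rightarrow> real.
        (\<forall>i<n. v i \<in> lorentz_cone m) \<and>
        (\<forall>i<n. \<forall>j<n. X i j = (\<Sum>t<m. v i t * v j t)))"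

definition completely_positive :: "nat \<Rightarrow> (nat \<Rightarrow> nat \<Rightarrow> real) \<Rightarrow> bool" where
  "completely_positive n X \<longleftrightarrow>
     (\<exists>k. \<exists>a :: nat \<Rightarrow> nat \<Rightarrow> real.
        (\<forall>i<n. \<forall>t<k. a i t \<ge> 0) \<and>
        (\<forall>i<n. \<forall>j<n. X i j = (\<Sum>t<k. a i t * a j t)))"

definition hermitian_psd :: "nat \<Rightarrow> (nat \<Rightarrow> nat \<Rightarrow> complex) \<Rightarrow> bool" where
  "hermitian_psd d P \<longleftrightarrow>
     (\<forall>a<d. \<forall>b<d. P a b = cnj (P b a)) \<and>
     (\<forall>x :: nat \<Rightarrow> complex.
        0 \<le> Re (\<Sum>a<d. \<Sum>b<d. cnj (x a) * P a b * x b))"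

definition mat_trace_prod :: "nat \<Rightarrow> (nat \<Rightarrow> nat \<Rightarrow> complex) \<Rightarrow> (nat \<Rightarrow> nat \<Rightarrow> complex) \<Rightarrow> complex" where
  "mat_trace_prod d P Q = (\<Sum>a<d. \<Sum>b<d. P a b * Q b a)"

definition completely_positive_semidefinite :: "nat \<Rightarrow> (nat \<Rightarrow> nat \<Rightarrow> real) \<Rightarrow> bool" where
  "completely_positive_semidefinite n X \<longleftrightarrow>
     (\<exists>d\<ge>1. \<exists>P :: nat \<Rightarrow> nat \<Rightarrow> nat \<Rightarrow> complex.
        (\<forall>i<n. hermitian_psd d (P i)) \<and>
        (\<forall>i<n. \<forall>j<n. complex_of_real (X i j) = mat_trace_prod d (P i) (P j)))"

definition circ_pt :: "nat \<Rightarrow> nat \<Rightarrow> nat \<Rightarrow> real" where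
  "circ_pt n k t = (if t = 0 then 1
                    else if t = 1 then cos (2 * pi * real k / real n)
                    else if t = 2 then sin (2 * pi * real k / real n) else 0)"

definition circ_gram :: "nat \<Rightarrow> nat \<Rightarrow> nat \<Rightarrow> real" where
  "circ_gram n k k' = (\<Sum>t<3. circ_pt n k t * circ_pt n k' t)"

end

theory Submission
  imports Defs
begin


lemma gen: fixes k m :: nat and c :: "nat \<Rightarrow> real" and f :: "nat \<Rightarrow> nat \<Rightarrow> real" shows "(\<Sum>t<k. (\<Sum>j<m. c j * f (ix j) t)\<^sup>2) =
   (\<Sum>j<m. \<Sum>j'<m. c j * c j' * (\<Sum>t<k. f (ix j) t * f (ix j') t))"
proof -
  have "(\<Sum>t<k. (\<Sum>j<m. c j * f (ix j) t)\<^sup>2) =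
        (\<Sum>t<k. \<Sum>j<m. \<Sum>j'<m. c j * c j' * (f (ix j) t * f (ix j') t))"
  proof (rule sum.cong[OF refl])
    fix t
    have "(\<Sum>j<m. c j * f (ix j) t)\<^sup>2 = (\<Sum>j<m. \<Sum>j'<m. (c j * f (ix j) t) * (c j' * f (ix j') t))"
      by (simp add: power2_eq_square sum_product)
    thus "(\<Sum>j<m. c j * f (ix j) t)\<^sup>2 = (\<Sum>j<m. \<Sum>j'<m. c j * c j' * (f (ix j) t * f (ix j') t))"
      by (simp add: mult_ac)
  qed
  also have "\<dots> = (\<Sum>j<m. \<Sum>t<k. \<Sum>j'<m. c j * c j' * (f (ix j) t * f (ix j') t))"
    by (rule sum.swap)
  also have "\<dots> = (\<Sum>j<m. \<Sum>j'<m. \<Sum>t<k. c j * c j' * (f (ix j) t * f (ix j') t))"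
    by (simp add: sum.swap[of _ "{..<k}"])
  also have "\<dots> = (\<Sum>j<m. \<Sum>j'<m. c j * c j' * (\<Sum>t<k. f (ix j) t * f (ix j') t))"
    by (simp add: sum_distrib_left)
  finally show ?thesis .
qed

lemma quad: fixes k m :: nat
  assumes "\<forall>i<n. \<forall>j<n. circ_gram n i j = (\<Sum>t<k. a i t * a j t)" "\<forall>j<m. ix j < n"
  shows "(\<Sum>t<k. (\<Sum>j<m. c j * a (ix j) t)\<^sup>2) = (\<Sum>u<3. (\<Sum>j<m. c j * circ_pt n (ix j) u)\<^sup>2)"
  unfolding gen
  apply (rule sum.cong[OF refl])+
  using assms by (simp add: circ_gram_def)

lemma null: fixes k m :: nat
  assumes "\<forall>i<n. \<forall>j<n. circ_gram n i j = (\<Sum>t<k. a i t * a j t)" "\<forall>j<m. ix j < n"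
   "\<forall>u<3. (\<Sum>j<m. c j * circ_pt n (ix j) u) = 0" "t < k"
  shows "(\<Sum>j<m. c j * a (ix j) t) = 0"
proof -
  have "(\<Sum>t<k. (\<Sum>j<m. c j * a (ix j) t)\<^sup>2) = 0"
    using quad[OF assms(1,2)] assms(3) by simp
  hence "\<forall>t\<in>{..<k}. (\<Sum>j<m. c j * a (ix j) t)\<^sup>2 = 0"
    using sum_nonneg_eq_0_iff[of "{..<k}" "\<lambda>t. (\<Sum>j<m. c j * a (ix j) t)\<^sup>2"] by simp
  with assms(4) show ?thesis by simp
qed

lemma cg: "circ_gram n i j = 1 + cos (2*pi*real i/real n) * cos (2*pi*real j/real n)
   + sin (2*pi*real i/real n) * sin (2*pi*real j/real n)"
  by (simp add: circ_gram_def circ_pt_def numeral_3_eq_3)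

lemma t4: "(\<Sum>j<(4::nat). f j) = f 0 + f 1 + f 2 + (f 3::real)"
  by (simp add: numeral_eq_Suc)
lemma t5: "(\<Sum>j<(5::nat). f j) = f 0 + f 1 + f 2 + f 3 + (f 4::real)"
  by (simp add: numeral_eq_Suc)



lemma case_lemma:
  fixes b0 bl b1 b1l b2 b2l c :: real
  assumes "b0 \<ge> 0" "bl \<ge> 0" "b1 \<ge> 0" "b1l \<ge> 0" "b2 \<ge> 0" "b2l \<ge> 0"
    "b0 * bl = 0" "b1 * b1l = 0" "b2 * b2l = 0"
    "b1 + b1l = b0 + bl" "b2 + b2l = b0 + bl"
    "c * b0 + b2 - 2 * c * b1 + (c - 1) * bl = 0" "0 < c" "c < 1"
  shows "b0 = 0"
proof (rule ccontr)
  assume h: "b0 \<noteq> 0"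
  hence bl: "bl = 0" using assms(7) by simp
  have s: "b0 > 0" using h assms(1) by simp
  have e: "c * b0 + b2 - 2 * c * b1 = 0" using assms(12) bl by simp
  show False
  proof (cases "b1 = 0")
    case True
    have "c * b0 > 0" using s assms(13) by simp
    moreover have "c * b0 + b2 = 0" using e True by simp
    ultimately show ?thesis using assms(5) by linarith
  next
    case False
    hence "b1l = 0" using assms(8) by simp
    hence b1: "b1 = b0" using assms(10) bl by simp
    hence b2: "b2 = c * b0" using e by simp
    show ?thesis
    proof (cases "b2 = 0")
      case True then show ?thesis using b2 s assms(13) by simp
    next
      case False
      hence "b2l = 0" using assms(9) by simp
      hence "b2 = b0" using assms(11) bl by simp
      hence "c * b0 = 1 * b0" using b2 by simp
      hence "c = 1" using s by (subst (asm) mult_cancel_right) simp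
      then show ?thesis using assms(14) by simp
    qed
  qed
qed

lemma sum0:
  fixes k :: nat and f g :: "nat \<Rightarrow> real"
  assumes "\<forall>t<k. f t \<ge> 0" "\<forall>t<k. g t \<ge> 0" "(\<Sum>t<k. f t * g t) = 0" "t < k"
  shows "f t * g t = 0"
  using sum_nonneg_eq_0_iff[of "{..<k}" "\<lambda>t. f t * g t"] assms by simp

lemma notcp:
  fixes l n :: nat
  assumes "l \<ge> 3" and "n = 2 * l"
  shows "\<not> completely_positive n (circ_gram n)"
proof
  assume "completely_positive n (circ_gram n)"
  then obtain k :: nat and a where nn: "\<forall>i<n. \<forall>t<k. a i t \<ge> (0::real)"
    and X: "\<forall>i<n. \<forall>j<n. circ_gram n i j = (\<Sum>t<k. a i t * a j t)"
    unfolding completely_positive_def by blast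
  define \<alpha> where "\<alpha> = pi / real l"
  define c where "c = cos \<alpha>"
  have lpos: "real l > 0" using assms by simp
  have th: "2 * pi * real i / real n = pi * real i / real l" for i
    using assms lpos by simp
  have th0: "2 * pi * real (0::nat) / real n = 0" by simp
  have thl: "2 * pi * real l / real n = pi" using th[of l] lpos by simp
  have th1: "2 * pi * real (1::nat) / real n = \<alpha>" using th[of 1] by (simp add: \<alpha>_def)
  have th2: "2 * pi * real (2::nat) / real n = 2 * \<alpha>" using th[of 2] by (simp add: \<alpha>_def)
  have th1l: "2 * pi * real (1 + l) / real n = \<alpha> + pi" using th[of "1+l"] lpos
    by (simp add: \<alpha>_def field_simps)
  have th2l: "2 * pi * real (2 + l) / real n = 2 * \<alpha> + pi" using th[of "2+l"] lpos
    by (simp add: \<alpha>_def field_simps)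
  have cpos: "0 < c" unfolding c_def \<alpha>_def
  proof (rule cos_gt_zero)
    show "0 < pi / real l" using lpos by simp
    show "pi / real l < pi / 2" using assms(1) lpos by (simp add: field_simps)
  qed
  have clt: "c < 1" unfolding c_def \<alpha>_def
  proof -
    have "cos (pi / real l) < cos 0"
      by (rule cos_monotone_0_pi) (use lpos assms(1) in \<open>auto simp: field_simps\<close>)
    thus "cos (pi / real l) < 1" by simp
  qed
  have ln: "l < n" "1 + l < n" "2 + l < n" "0 < n" "1 < n" "2 < n" using assms by auto
  have cosd: "cos (2 * \<alpha>) = 2 * c^2 - 1" unfolding c_def by (simp add: cos_double_cos)
  have sind: "sin (2 * \<alpha>) = 2 * sin \<alpha> * c" unfolding c_def by (simp add: sin_double)
  have X0l: "circ_gram n 0 l = 0" unfolding cg using thl by simp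
  have X11: "circ_gram n 1 (1 + l) = 0" unfolding cg using th1 th1l
    by (simp add: cos_add sin_add) (smt (verit) sin_cos_squared_add power2_eq_square)
  have X22: "circ_gram n 2 (2 + l) = 0" unfolding cg using th2 th2l
    by (simp add: cos_add sin_add) (smt (verit) sin_cos_squared_add power2_eq_square)
  have X00: "circ_gram n 0 0 = 2" unfolding cg by simp
  have sA: "sin (2 * \<alpha>) = 2 * sin \<alpha> * c" "cos (2 * \<alpha>) = 2 * c^2 - 1" using sind cosd by auto
  have p0: "circ_pt n i 0 = 1" for i by (simp add: circ_pt_def)
  have p1: "circ_pt n 0 1 = 1" "circ_pt n 0 2 = 0" by (simp_all add: circ_pt_def)
  have p2: "circ_pt n l 1 = -1" "circ_pt n l 2 = 0" using thl by (simp_all add: circ_pt_def)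
  have p3: "circ_pt n 1 1 = c" "circ_pt n 1 2 = sin \<alpha>" using th1 by (simp_all add: circ_pt_def c_def)
  have p4: "circ_pt n (1+l) 1 = -c" "circ_pt n (1+l) 2 = - sin \<alpha>" using th1l
    by (simp_all add: circ_pt_def c_def del: of_nat_add)
  have p5: "circ_pt n 2 1 = 2 * c^2 - 1" "circ_pt n 2 2 = 2 * sin \<alpha> * c" using th2 sA
    by (simp_all add: circ_pt_def)
  have p6: "circ_pt n (2+l) 1 = -(2 * c^2 - 1)" "circ_pt n (2+l) 2 = -(2 * sin \<alpha> * c)" using th2l sA
    by (simp_all add: circ_pt_def del: of_nat_add)
  have pS: "circ_pt n (Suc 0) (Suc 0) = c" "circ_pt n (Suc 0) 2 = sin \<alpha>"
     "circ_pt n (Suc l) (Suc 0) = -c" "circ_pt n (Suc l) 2 = - sin \<alpha>"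
     "circ_pt n (Suc (Suc l)) (Suc 0) = -(2 * c^2 - 1)" "circ_pt n (Suc (Suc l)) 2 = -(2 * sin \<alpha> * c)"
     "circ_pt n 2 (Suc 0) = 2 * c^2 - 1" "circ_pt n l (Suc 0) = -1" "circ_pt n 0 (Suc 0) = 1"
    using p3 p4 p5 p6 p2 p1 by (simp_all add: numeral_2_eq_2)
  have u3: "(\<forall>u<3. P u) \<longleftrightarrow> P 0 \<and> P 1 \<and> P (2::nat)" for P
    by (auto simp: numeral_3_eq_3 numeral_2_eq_2 less_Suc_eq)
  have z1: "(\<Sum>j<(4::nat). [1,1,-1,-1] ! j * a ([1, 1+l, 0, l] ! j) t) = 0" if "t < k" for t
  proof (rule null[OF X _ _ that])
    show "\<forall>j<4. [1, 1+l, 0, l] ! j < n" using ln by (auto simp: numeral_eq_Suc less_Suc_eq)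
    show "\<forall>u<3. (\<Sum>j<4. [1,1,-1,-1] ! j * circ_pt n ([1, 1+l, 0, l] ! j) u) = 0"
      unfolding u3 t4 by (simp add: p0 p1 p2 p3 p4 pS)
  qed
  have z2: "(\<Sum>j<(4::nat). [1,1,-1,-1] ! j * a ([2, 2+l, 0, l] ! j) t) = 0" if "t < k" for t
  proof (rule null[OF X _ _ that])
    show "\<forall>j<4. [2, 2+l, 0, l] ! j < n" using ln by (auto simp: numeral_eq_Suc less_Suc_eq)
    show "\<forall>u<3. (\<Sum>j<4. [1,1,-1,-1] ! j * circ_pt n ([2, 2+l, 0, l] ! j) u) = 0"
      unfolding u3 t4 by (simp add: p0 p1 p2 p5 p6 pS)
  qed
  have z3: "(\<Sum>j<(4::nat). [c,1,-2*c,c-1] ! j * a ([0, 2, 1, l] ! j) t) = 0" if "t < k" for t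
  proof (rule null[OF X _ _ that])
    show "\<forall>j<4. [0, 2, 1, l] ! j < n" using ln by (auto simp: numeral_eq_Suc less_Suc_eq)
    show "\<forall>u<3. (\<Sum>j<4. [c,1,-2*c,c-1] ! j * circ_pt n ([0, 2, 1, l] ! j) u) = 0"
      unfolding u3 t4 by (simp add: p0 p1 p2 p3 p5 pS algebra_simps power2_eq_square)
  qed
  have a0: "a 0 t = 0" if "t < k" for t
  proof (rule case_lemma)
    show "a 0 t \<ge> 0" "a l t \<ge> 0" "a 1 t \<ge> 0" "a (1+l) t \<ge> 0" "a 2 t \<ge> 0" "a (2+l) t \<ge> 0"
      using nn ln that by auto
    show "a 0 t * a l t = 0" using sum0[of k "a 0" "a l"] nn ln X X0l that by auto
    show "a 1 t * a (1+l) t = 0" using sum0[of k "a 1" "a (1+l)"] nn ln X X11 that by auto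
    show "a 2 t * a (2+l) t = 0" using sum0[of k "a 2" "a (2+l)"] nn ln X X22 that by auto
    show "a 1 t + a (1+l) t = a 0 t + a l t" using z1[OF that] unfolding t4 by simp
    show "a 2 t + a (2+l) t = a 0 t + a l t" using z2[OF that] unfolding t4 by simp
    show "c * a 0 t + a 2 t - 2 * c * a 1 t + (c - 1) * a l t = 0" using z3[OF that] unfolding t4 by simp
    show "0 < c" "c < 1" by (fact cpos, fact clt)
  qed
  have "circ_gram n 0 0 = (\<Sum>t<k. a 0 t * a 0 t)" using X ln by auto
  also have "\<dots> = 0" using a0 by simp
  finally show False using X00 by simp
qed



lemma gl: "gram_lorentz n (circ_gram n)"
  unfolding gram_lorentz_def
proof (intro exI[of _ 3] conjI exI[of _ "circ_pt n"] allI impI)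
  fix i
  have "{1..<3::nat} = {1,2}" by auto
  thus "circ_pt n i \<in> lorentz_cone 3"
    by (simp add: lorentz_cone_def circ_pt_def)
qed (auto simp: circ_gram_def)

lemma cpsd: "completely_positive_semidefinite n (circ_gram n)"
proof -
  define th where "th i = 2 * pi * real i / real n" for i
  define u where "u i a = (if a = (0::nat) then cos (th i / 2) else sin (th i / 2))" for i a
  define P where "P i a b = complex_of_real (sqrt 2 * u i a * u i b)" for i a b
  have l2: "(\<Sum>a<(2::nat). f a) = f 0 + f 1" for f :: "nat \<Rightarrow> complex"
    by (simp add: numeral_eq_Suc)
  have herm: "hermitian_psd 2 (P i)" for i
    unfolding hermitian_psd_def
  proof (intro conjI allI impI)
    fix a b assume "a < (2::nat)" "b < (2::nat)"
    show "P i a b = cnj (P i b a)" by (simp add: P_def mult_ac)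
  next
    fix x :: "nat \<Rightarrow> complex"
    define y where "y = of_real (u i 0) * x 0 + of_real (u i 1) * x 1"
    have "(\<Sum>a<2. \<Sum>b<2. cnj (x a) * P i a b * x b) = of_real (sqrt 2) * (cnj y * y)"
      unfolding l2 y_def P_def by (simp add: algebra_simps)
    also have "\<dots> = of_real (sqrt 2 * (cmod y)^2)"
      by (simp only: of_real_mult complex_norm_square mult.commute)
    finally show "0 \<le> Re (\<Sum>a<2. \<Sum>b<2. cnj (x a) * P i a b * x b)" by simp
  qed
  have tr: "complex_of_real (circ_gram n i j) = mat_trace_prod 2 (P i) (P j)" for i j
  proof -
    let ?A = "th i / 2" and ?B = "th j / 2"
    have s2: "sqrt 2 * (sqrt 2 * x) = 2 * x" for x :: real
      by (simp flip: mult.assoc)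
    have "mat_trace_prod 2 (P i) (P j) = of_real (2 * (cos ?A * cos ?B + sin ?A * sin ?B)^2)"
      unfolding mat_trace_prod_def l2 P_def u_def
      by (simp add: power2_eq_square algebra_simps s2 flip: of_real_mult of_real_add)
    also have "2 * (cos ?A * cos ?B + sin ?A * sin ?B)^2 = 1 + cos (2*(?A - ?B))"
      by (simp only: cos_diff[symmetric] cos_double_cos[of "?A - ?B"])
    also have "cos (2*(?A - ?B)) = cos (th i) * cos (th j) + sin (th i) * sin (th j)"
      by (simp add: cos_diff[symmetric] algebra_simps)
    finally show ?thesis by (simp add: cg th_def)
  qed
  show ?thesis unfolding completely_positive_semidefinite_def
    using herm tr by (intro exI[of _ 2] conjI exI[of _ P]) auto
qed


theorem corollary4p11:
  fixes l n :: nat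
  assumes "odd l" and "l \<ge> 3" and "n = 2 * l"
  shows "gram_lorentz n (circ_gram n) \<and> \<not> completely_positive n (circ_gram n) \<and>
         completely_positive_semidefinite n (circ_gram n)"
  using gl notcp[OF assms(2,3)] cpsd by blast

end
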